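(* Let $X=\{x\in\{0,1\}^n: Ax\le b\}$ for a real matrix $A$ and vector $b$, and assume the standing assumptions. Suppose $\lambda_i(\pi)\neq0$ for some $i\in I$. Define the target inequality $\tilde\pi^\top x\le\tilde\pi_0$ by $\tilde\pi=e_i,\ \tilde\pi_0=0$ (i.e. $x_i\le 0$) if $i\in S^+(\pi)$, and $\tilde\pi=-e_i,\ \tilde\pi_0=-1$ (i.e. $x_i\ge 1$) if $i\in S^-(\pi)$. Let $$\gamma^*=\min\Big\{\pi_0x_0-\pi^\top x:\ (x,x_0)\in\mathbb{R}^n\times\mathbb{R}_{\ge0},\ Ax-bx_0\le0,\ 0\le x_j\le x_0\ \forall j,\ \big(x_j\le 0 \text{ or } x_j\ge x_0\big)\ \forall j\in I,\ \tilde\pi_0x_0-\tilde\pi^\top x=-1\Big\}.$$ Then $\gamma^*=|\lambda_i(\pi)|$.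
   Context: Let $n\ge1$, $I=\{1,\dots,n\}$, $e_i$ the $i$-th unit vector. Standing assumptions: (a) $\pi^\top x\le\pi_0$ is valid for $X$ and $\pi_0=\max_{x\in X}\pi^\top x$; (b) for every $i\in I$ there exist $x,x'\in X$ with $x_i=0$, $x'_i=1$. $\lambda_i(\pi):=\max_{x\in X}\{\pi^\top x:x_i=0\}-\max_{x\in X}\{\pi^\top x:x_i=1\}$; $S^-(\pi)=\{i:\lambda_i(\pi)<0\}$, $S^+(\pi)=\{i:\lambda_i(\pi)>0\}$. *)

theory Defs
  imports "HOL-Analysis.Analysis"
begin

text \<open>Vectors in R^n are modelled as real^'n for a finite index type 'n
  (so I = UNIV :: 'n set, n = CARD('n) >= 1); A is an m x n real matrix.\<close>

definition binX :: "real^'n^'m \<Rightarrow> real^'m \<Rightarrow> (real^'n) set" where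
  "binX A b = {x. (\<forall>j. x$j = 0 \<or> x$j = 1) \<and> (\<forall>k. (A *v x)$k \<le> b$k)}"

definition lambda_i :: "(real^'n) set \<Rightarrow> real^'n \<Rightarrow> 'n \<Rightarrow> real" where
  "lambda_i X p i =
     Max ((\<lambda>x. p \<bullet> x) ` {x\<in>X. x$i = 0}) - Max ((\<lambda>x. p \<bullet> x) ` {x\<in>X. x$i = 1})"

definition S_minus :: "(real^'n) set \<Rightarrow> real^'n \<Rightarrow> 'n set" where
  "S_minus X p = {i. lambda_i X p i < 0}"

definition S_plus :: "(real^'n) set \<Rightarrow> real^'n \<Rightarrow> 'n set" where
  "S_plus X p = {i. lambda_i X p i > 0}"

definition lift_feasible ::
  "real^'n^'m \<Rightarrow> real^'m \<Rightarrow> real^'n \<Rightarrow> real \<Rightarrow> ((real^'n) \<times> real) set" where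
  "lift_feasible A b pt pt0 = {(x, x0).
      x0 \<ge> 0 \<and>
      (\<forall>k. (A *v x)$k - b$k * x0 \<le> 0) \<and>
      (\<forall>j. 0 \<le> x$j \<and> x$j \<le> x0) \<and>
      (\<forall>j. x$j \<le> 0 \<or> x$j \<ge> x0) \<and>
      pt0 * x0 - pt \<bullet> x = -1}"

end

theory Submission
  imports Defs
begin

lemma binX_finite: "finite (binX (A::real^'n^'m) b)"
proof -
  have fin: "finite (vec_lambda ` (Pi\<^sub>E (UNIV::'n set) (\<lambda>_. {0::real,1})))"
    by (intro finite_imageI finite_PiE) auto
  have "binX A b \<subseteq> vec_lambda ` (Pi\<^sub>E (UNIV::'n set) (\<lambda>_. {0::real,1}))"
  proof
    fix x assume "x \<in> binX A b"
    hence "vec_nth x \<in> Pi\<^sub>E UNIV (\<lambda>_. {0::real,1})"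
      by (auto simp: binX_def PiE_UNIV_domain)
    moreover have "x = vec_lambda (vec_nth x)" by simp
    ultimately show "x \<in> vec_lambda ` (Pi\<^sub>E (UNIV::'n set) (\<lambda>_. {0::real,1}))" by blast
  qed
  thus ?thesis using fin finite_subset by blast
qed

lemma feas_char:
  assumes "(x, x0) \<in> lift_feasible A b pt pt0"
    and "(pt = axis i 1 \<and> pt0 = 0) \<or> (pt = - axis i 1 \<and> pt0 = -1)"
  shows "x0 = 1 \<and> x \<in> binX A b \<and> (pt = axis i 1 \<longrightarrow> x$i = 1) \<and> (pt = - axis i 1 \<longrightarrow> x$i = 0)"
proof -
  from assms(1) have f: "x0 \<ge> 0" "\<forall>k. (A *v x)$k - b$k * x0 \<le> 0"
    "\<forall>j. 0 \<le> x$j \<and> x$j \<le> x0" "\<forall>j. x$j \<le> 0 \<or> x$j \<ge> x0" "pt0 * x0 - pt \<bullet> x = -1"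
    by (auto simp: lift_feasible_def)
  have xi: "x$i = 0 \<or> x$i = x0" using f(3,4) by (meson order_antisym)
  have x01: "x0 = 1 \<and> (pt = axis i 1 \<longrightarrow> x$i = 1) \<and> (pt = - axis i 1 \<longrightarrow> x$i = 0)"
  proof (cases "pt = axis i 1 \<and> pt0 = 0")
    case True
    hence "x$i = 1" using f(5) by (simp add: inner_axis')
    moreover have "pt \<noteq> - axis i 1"
    proof
      assume "pt = - axis i 1"
      hence "pt$i = -1" by (simp add: axis_def)
      moreover have "pt$i = 1" using True by (simp add: axis_def)
      ultimately show False by simp
    qed
    ultimately show ?thesis using xi True by auto
  next
    case False
    hence T: "pt = - axis i 1" "pt0 = -1" using assms(2) by auto
    hence "- x0 + x$i = -1" using f(5) by (simp add: inner_axis' inner_minus_left)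
    hence "x$i = 0 \<and> x0 = 1" using xi by auto
    moreover have "pt \<noteq> axis i 1"
    proof
      assume "pt = axis i 1"
      hence "pt$i = 1" by (simp add: axis_def)
      moreover have "pt$i = -1" using T by (simp add: axis_def)
      ultimately show False by simp
    qed
    ultimately show ?thesis using T by auto
  qed
  have "\<forall>j. x$j = 0 \<or> x$j = 1" using f(3,4) x01 by (meson order_antisym)
  moreover have "\<forall>k. (A *v x)$k \<le> b$k" using f(2) x01 by auto
  ultimately show ?thesis using x01 by (auto simp: binX_def)
qed

theorem proposition1:
  fixes A :: "real^'n^'m" and b :: "real^'m" and p :: "real^'n" and p0 :: real
    and i :: 'n and pt :: "real^'n" and pt0 :: real
  assumes valid: "\<forall>x\<in>binX A b. p \<bullet> x \<le> p0"
    and p0_max: "p0 = Max ((\<lambda>x. p \<bullet> x) ` binX A b)"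
    and both: "\<forall>j. (\<exists>x\<in>binX A b. x$j = 0) \<and> (\<exists>x\<in>binX A b. x$j = 1)"
    and nz: "lambda_i (binX A b) p i \<noteq> 0"
    and pt_def: "pt = (if i \<in> S_plus (binX A b) p then axis i 1 else - axis i 1)"
    and pt0_def: "pt0 = (if i \<in> S_plus (binX A b) p then 0 else -1)"
  shows "\<bar>lambda_i (binX A b) p i\<bar> \<in>
           {p0 * x0 - p \<bullet> x | x x0. (x, x0) \<in> lift_feasible A b pt pt0}
       \<and> (\<forall>(x, x0) \<in> lift_feasible A b pt pt0.
            \<bar>lambda_i (binX A b) p i\<bar> \<le> p0 * x0 - p \<bullet> x)"
proof -
  define X where "X = binX A b"
  define S0 where "S0 = {x\<in>X. x$i = 0}"
  define S1 where "S1 = {x\<in>X. x$i = 1}"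
  define M0 where "M0 = Max ((\<lambda>x. p \<bullet> x) ` S0)"
  define M1 where "M1 = Max ((\<lambda>x. p \<bullet> x) ` S1)"
  have finX: "finite X" unfolding X_def by (rule binX_finite)
  have fin0: "finite ((\<lambda>x. p \<bullet> x) ` S0)" and fin1: "finite ((\<lambda>x. p \<bullet> x) ` S1)"
    using finX by (auto simp: S0_def S1_def)
  have ne0: "S0 \<noteq> {}" and ne1: "S1 \<noteq> {}" using both by (auto simp: S0_def S1_def X_def)
  obtain x0s where x0s: "x0s \<in> S0" "p \<bullet> x0s = M0"
    using Max_in[OF fin0] ne0 unfolding M0_def by fastforce
  obtain x1s where x1s: "x1s \<in> S1" "p \<bullet> x1s = M1"
    using Max_in[OF fin1] ne1 unfolding M1_def by fastforce
  have le0: "\<And>x. x \<in> S0 \<Longrightarrow> p \<bullet> x \<le> M0" using fin0 unfolding M0_def by auto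
  have le1: "\<And>x. x \<in> S1 \<Longrightarrow> p \<bullet> x \<le> M1" using fin1 unfolding M1_def by auto
  have lam: "lambda_i X p i = M0 - M1" by (simp add: lambda_i_def M0_def M1_def S0_def S1_def)
  have "X \<noteq> {}" using ne0 by (auto simp: S0_def)
  then obtain xm where xm: "xm \<in> X" "p \<bullet> xm = p0"
    using Max_in[of "(\<lambda>x. p \<bullet> x) ` X"] finX p0_max unfolding X_def by fastforce
  have "p0 \<ge> M0" "p0 \<ge> M1" using valid x0s x1s by (auto simp: X_def S0_def S1_def)
  moreover have "p0 \<le> M0 \<or> p0 \<le> M1"
  proof -
    have "xm$i = 0 \<or> xm$i = 1" using xm by (auto simp: X_def binX_def)
    thus ?thesis using xm le0 le1 S0_def S1_def by force
  qed
  ultimately have p0eq: "p0 = max M0 M1" by linarith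
  have pv: "\<And>x. (x, 1) \<in> lift_feasible A b pt pt0 \<Longrightarrow> p0 * 1 - p \<bullet> x = p0 - p \<bullet> x" by simp
  show ?thesis
  proof (cases "i \<in> S_plus X p")
    case True
    hence pos: "M0 > M1" using lam by (simp add: S_plus_def)
    have ptv: "pt = axis i 1" "pt0 = 0" using True pt_def pt0_def X_def by auto
    have feas: "(x1s, 1) \<in> lift_feasible A b pt pt0"
      using x1s(1) unfolding S1_def X_def binX_def lift_feasible_def ptv
      by (auto simp: inner_axis') (metis order.refl zero_le_one linorder_not_le zero_neq_one)+
    have "\<bar>lambda_i (binX A b) p i\<bar> = p0 * 1 - p \<bullet> x1s"
      using lam pos p0eq x1s X_def by auto
    hence A1: "\<bar>lambda_i (binX A b) p i\<bar> \<in>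
           {p0 * x0 - p \<bullet> x | x x0. (x, x0) \<in> lift_feasible A b pt pt0}" using feas by blast
    have "\<forall>(x, x0) \<in> lift_feasible A b pt pt0.
            \<bar>lambda_i (binX A b) p i\<bar> \<le> p0 * x0 - p \<bullet> x"
    proof (clarify)
      fix x x0 assume h: "(x, x0) \<in> lift_feasible A b pt pt0"
      from feas_char[OF h] ptv have "x0 = 1" "x \<in> S1" by (auto simp: S1_def X_def)
      thus "\<bar>lambda_i (binX A b) p i\<bar> \<le> p0 * x0 - p \<bullet> x"
        using le1 lam pos p0eq X_def by fastforce
    qed
    with A1 show ?thesis by blast
  next
    case False
    hence neg: "M0 < M1" using lam nz X_def by (simp add: S_plus_def)
    have ptv: "pt = - axis i 1" "pt0 = -1" using False pt_def pt0_def X_def by auto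
    have feas: "(x0s, 1) \<in> lift_feasible A b pt pt0"
      using x0s(1) unfolding S0_def X_def binX_def lift_feasible_def ptv
      by (auto simp: inner_axis' inner_minus_left) (metis order.refl zero_le_one linorder_not_le zero_neq_one)+
    have "\<bar>lambda_i (binX A b) p i\<bar> = p0 * 1 - p \<bullet> x0s"
      using lam neg p0eq x0s X_def by auto
    hence A1: "\<bar>lambda_i (binX A b) p i\<bar> \<in>
           {p0 * x0 - p \<bullet> x | x x0. (x, x0) \<in> lift_feasible A b pt pt0}" using feas by blast
    have "\<forall>(x, x0) \<in> lift_feasible A b pt pt0.
            \<bar>lambda_i (binX A b) p i\<bar> \<le> p0 * x0 - p \<bullet> x"
    proof (clarify)
      fix x x0 assume h: "(x, x0) \<in> lift_feasible A b pt pt0"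
      from feas_char[OF h] ptv have "x0 = 1" "x \<in> S0" by (auto simp: S0_def X_def)
      thus "\<bar>lambda_i (binX A b) p i\<bar> \<le> p0 * x0 - p \<bullet> x"
        using le0 lam neg p0eq X_def by fastforce
    qed
    with A1 show ?thesis by blast
  qed
qed

end
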